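(* For any $d\ge1$, $K\ge2$ and any $\mathbf W\in\mathrm{OB}(d,K)$, $$\frac{\rho_{\text{one-vs-one}}(\mathbf W)^2}{2}\le\rho_{\text{one-vs-rest}}(\mathbf W)\le\rho_{\text{one-vs-one}}(\mathbf W).$$
   Context: $\mathrm{OB}(d,K)$ is the set of real $d\times K$ matrices with unit-norm columns $\mathbf w_1,\dots,\mathbf w_K$. $\operatorname{dist}(\mathbf v,\mathcal W)=\inf\{\|\mathbf v-\mathbf w\|_2:\mathbf w\in\operatorname{conv}(\mathcal W)\}$; $\rho_{\text{one-vs-rest}}(\mathbf W)=\min_k\operatorname{dist}(\mathbf w_k,\{\mathbf w_j\}_{j\ne k})$; $\rho_{\text{one-vs-one}}(\mathbf W)=\min_k\min_{k'\ne k}\|\mathbf w_k-\mathbf w_{k'}\|_2$. *)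

theory Defs
  imports "HOL-Analysis.Analysis"
begin

text \<open>Oblique manifold OB(d,K): real d x K matrices (d = CARD('d), K = CARD('k))
  whose columns have unit Euclidean norm.\<close>
definition oblique :: "real^'k^'d \<Rightarrow> bool" where
  "oblique W \<longleftrightarrow> (\<forall>k. norm (column k W) = 1)"

definition dist_hull :: "'a::real_normed_vector \<Rightarrow> 'a set \<Rightarrow> real" where
  "dist_hull v S = Inf {norm (v - w) | w. w \<in> convex hull S}"

definition rho_one_vs_rest :: "real^'k^'d \<Rightarrow> real" where
  "rho_one_vs_rest W =
     Min ((\<lambda>k. dist_hull (column k W) {column j W | j. j \<noteq> k}) ` UNIV)"

definition rho_one_vs_one :: "real^'k^'d \<Rightarrow> real" where
  "rho_one_vs_one W =
     Min ((\<lambda>(k, k'). norm (column k W - column k' W)) ` {(k, k'). k' \<noteq> k})"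

end

theory Submission
  imports Defs
begin

lemma two_distinct_card:
  assumes "CARD('k::finite) \<ge> 2"
  shows "\<exists>a b::'k. a \<noteq> b"
proof (rule ccontr)
  assume "\<not> (\<exists>a b::'k. a \<noteq> b)"
  then have "(UNIV::'k set) = {undefined}" by auto
  then have "CARD('k) = 1" by (metis card.empty card.insert empty_iff finite.emptyI One_nat_def)
  then show False using assms by simp
qed

lemma hull_inner_bound:
  fixes v :: "'a::real_inner"
  assumes "\<forall>s\<in>S. inner v s \<le> c" and "w \<in> convex hull S"
  shows "inner v w \<le> c"
proof -
  have "convex hull S \<subseteq> {x. inner v x \<le> c}"
    by (rule hull_minimal) (use assms(1) convex_halfspace_le in auto)
  then show ?thesis using assms(2) by auto
qed

lemma key_bound:
  fixes v :: "'a::real_inner"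
  assumes nv: "norm v = 1" and S: "\<forall>s\<in>S. norm s = 1 \<and> r \<le> norm (v - s)"
    and r0: "0 \<le> r" and w: "w \<in> convex hull S"
  shows "r\<^sup>2 / 2 \<le> norm (v - w)"
proof -
  have "\<forall>s\<in>S. inner v s \<le> 1 - r\<^sup>2/2"
  proof
    fix s assume s: "s \<in> S"
    have e: "(norm (v - s))\<^sup>2 = 2 - 2 * inner v s"
      using nv S s by (simp add: power2_norm_eq_inner inner_diff inner_commute norm_eq_1)
    have "r\<^sup>2 \<le> (norm (v - s))\<^sup>2" using S s r0 by (simp add: power_mono)
    then show "inner v s \<le> 1 - r\<^sup>2/2" using e by simp
  qed
  then have i: "inner v w \<le> 1 - r\<^sup>2/2" using hull_inner_bound w by blast
  have "inner v (v - w) \<le> norm v * norm (v - w)" by (rule norm_cauchy_schwarz)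
  moreover have "inner v (v - w) = 1 - inner v w"
    using nv by (simp add: inner_diff power2_norm_eq_inner[symmetric])
  ultimately show ?thesis using i nv by simp
qed

theorem mainTheorem15:
  fixes W :: "real^'k^'d"
  assumes "CARD('k) \<ge> 2"
    and "oblique W"
  shows "(rho_one_vs_one W)\<^sup>2 / 2 \<le> rho_one_vs_rest W
         \<and> rho_one_vs_rest W \<le> rho_one_vs_one W"
proof -
  define \<rho> where "\<rho> = rho_one_vs_one W"
  define P where "P = (\<lambda>(k::'k, k'). norm (column k W - column k' W)) ` {(k, k'). k' \<noteq> k}"
  have nrm: "\<And>k. norm (column k W) = 1" using assms(2) by (simp add: oblique_def)
  obtain a b :: 'k where ab: "a \<noteq> b" using two_distinct_card[OF assms(1)] by blast
  have finP: "finite P" unfolding P_def by simp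
  have neP: "P \<noteq> {}" unfolding P_def using ab by auto
  have rhoP: "\<rho> = Min P" unfolding \<rho>_def P_def rho_one_vs_one_def by simp
  have rho_le: "\<And>k k'. k' \<noteq> k \<Longrightarrow> \<rho> \<le> norm (column k W - column k' W)"
    unfolding rhoP using finP by (intro Min_le) (auto simp: P_def)
  have "\<rho> \<in> P" unfolding rhoP using finP neP by (rule Min_in)
  then have rho0: "0 \<le> \<rho>" unfolding P_def by auto
  define D where "D = (\<lambda>k. dist_hull (column k W) {column j W | j. j \<noteq> k})"
  have rest: "rho_one_vs_rest W = Min (range D)" unfolding rho_one_vs_rest_def D_def by simp
  have lowD: "\<rho>\<^sup>2 / 2 \<le> D k" for k
  proof -
    obtain j :: 'k where j: "j \<noteq> k" using ab by metis
    let ?S = "{column j W | j. j \<noteq> k}"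
    have ne: "{norm (column k W - w) | w. w \<in> convex hull ?S} \<noteq> {}"
      using j hull_subset[of ?S convex] by blast
    show ?thesis unfolding D_def dist_hull_def
    proof (rule cInf_greatest[OF ne])
      fix x assume "x \<in> {norm (column k W - w) | w. w \<in> convex hull ?S}"
      then obtain w where x: "x = norm (column k W - w)" and w: "w \<in> convex hull ?S" by blast
      have "\<forall>s\<in>?S. norm s = 1 \<and> \<rho> \<le> norm (column k W - s)"
        using nrm rho_le by auto
      then show "\<rho>\<^sup>2 / 2 \<le> x" using key_bound[OF nrm _ rho0 w] x by blast
    qed
  qed
  have upD: "D k \<le> norm (column k W - column k' W)" if "k' \<noteq> k" for k k'
  proof -
    let ?S = "{column j W | j. j \<noteq> k}"
    have "column k' W \<in> convex hull ?S" using that hull_subset[of ?S convex] by blast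
    then show ?thesis unfolding D_def dist_hull_def
      by (intro cInf_lower) (auto intro: bdd_belowI[where m=0])
  qed
  have "\<rho>\<^sup>2 / 2 \<le> Min (range D)" using lowD by (subst Min_ge_iff) auto
  moreover have "Min (range D) \<le> \<rho>"
  proof -
    have "\<rho> \<in> P" unfolding rhoP using finP neP by (rule Min_in)
    then obtain k k' where kk: "k' \<noteq> k" "\<rho> = norm (column k W - column k' W)"
      unfolding P_def by auto
    have "Min (range D) \<le> D k" by simp
    also have "\<dots> \<le> \<rho>" using upD[OF kk(1)] kk(2) by simp
    finally show ?thesis .
  qed
  ultimately show ?thesis unfolding rest \<rho>_def by simp
qed

end
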